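(* Let $f:\{0,1\}^n\to\{-1,1\}$ and $J\subseteq[n]$. Then $$\mathrm{SymInf}_f(J)=\tfrac12\sum_{S\subseteq[n]}\mathop{\mathbf{Var}}_{\pi\in\mathcal{S}_J}\big[\widehat f(\pi S)\big],$$ where $\pi$ is uniform in $\mathcal{S}_J$ and $\pi S=\{\pi(i):i\in S\}$.
   Context: $\mathcal{S}_J$ is the set of permutations of $[n]$ fixing every element outside $J$. For $x\in\{0,1\}^n$ and a permutation $\pi$, $\pi x$ is the vector whose $\pi(i)$-th coordinate is $x_i$. The symmetric influence of $J$ is $\mathrm{SymInf}_f(J)=\Pr_{x,\pi}[f(x)\ne f(\pi x)]$ with $x$ uniform in $\{0,1\}^n$ and $\pi$ uniform in $\mathcal{S}_J$. For $S\subseteq[n]$, $\chi_S(x)=(-1)^{\sum_{i\in S}x_i}$ and $\widehat f(S)=\mathbf{E}_x[f(x)\chi_S(x)]$ is the Fourier coefficient. *)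

theory Defs
  imports "HOL-Analysis.Analysis" "HOL-Combinatorics.Permutations"
begin

text \<open>Points of the cube {0,1}^n, indexed by [n] = {0..<n}: boolean functions
  on nat that are False outside {0..<n} (True means coordinate 1).\<close>
definition cube :: "nat \<Rightarrow> (nat \<Rightarrow> bool) set" where
  "cube n = {x. \<forall>i. n \<le> i \<longrightarrow> \<not> x i}"

definition symJ :: "nat set \<Rightarrow> (nat \<Rightarrow> nat) set" where
  "symJ J = {\<pi>. \<pi> permutes J}"

definition perm_act :: "(nat \<Rightarrow> nat) \<Rightarrow> (nat \<Rightarrow> bool) \<Rightarrow> (nat \<Rightarrow> bool)" where
  "perm_act \<pi> x = x \<circ> inv \<pi>"

definition avg :: "'a set \<Rightarrow> ('a \<Rightarrow> real) \<Rightarrow> real" where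
  "avg A g = (\<Sum>a\<in>A. g a) / real (card A)"

definition var :: "'a set \<Rightarrow> ('a \<Rightarrow> real) \<Rightarrow> real" where
  "var A g = avg A (\<lambda>a. (g a - avg A g)^2)"

definition SymInf :: "nat \<Rightarrow> ((nat \<Rightarrow> bool) \<Rightarrow> real) \<Rightarrow> nat set \<Rightarrow> real" where
  "SymInf n f J = avg (cube n \<times> symJ J)
      (\<lambda>(x, \<pi>). if f x \<noteq> f (perm_act \<pi> x) then 1 else 0)"

definition chi :: "nat set \<Rightarrow> (nat \<Rightarrow> bool) \<Rightarrow> real" where
  "chi S x = (-1) ^ card {i\<in>S. x i}"

definition fourier :: "nat \<Rightarrow> ((nat \<Rightarrow> bool) \<Rightarrow> real) \<Rightarrow> nat set \<Rightarrow> real" where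
  "fourier n f S = avg (cube n) (\<lambda>x. f x * chi S x)"

end

theory Submission
  imports Defs
begin

lemma cube_bij: "bij_betw (\<lambda>x. {i. x i}) (cube n) (Pow {0..<n})"
  by (rule bij_betw_byWitness[where f'="\<lambda>A i. i \<in> A"]) (auto simp: cube_def not_le)

lemma finite_cube: "finite (cube n)"
  using cube_bij bij_betw_finite by blast

lemma card_cube: "card (cube n) = 2^n"
  using bij_betw_same_card[OF cube_bij] by (simp add: card_Pow)

lemma chi_prod: "finite S \<Longrightarrow> chi S x = (\<Prod>i\<in>S. if x i then -1 else 1)"
  by (simp add: chi_def prod.If_cases Int_def conj_commute)

lemma pow_prod: "finite A \<Longrightarrow> (\<Sum>S\<in>Pow A. \<Prod>i\<in>S. c i) = (\<Prod>i\<in>A. c i + (1::real))"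
  by (simp add: prod_add)

lemma kernel:
  assumes "x \<in> cube n" "y \<in> cube n"
  shows "(\<Sum>S\<in>Pow {0..<n}. chi S x * chi S y) = (if x = y then 2^n else 0)"
proof -
  have "(\<Sum>S\<in>Pow {0..<n}. chi S x * chi S y)
      = (\<Sum>S\<in>Pow {0..<n}. \<Prod>i\<in>S. if x i = y i then 1 else -1)"
  proof (rule sum.cong[OF refl])
    fix S assume "S \<in> Pow {0..<n}"
    then have f: "finite S" by (meson PowD finite_atLeastLessThan finite_subset)
    show "chi S x * chi S y = (\<Prod>i\<in>S. if x i = y i then 1 else -1)"
      unfolding chi_prod[OF f] prod.distrib[symmetric] by (rule prod.cong) auto
  qed
  also have "\<dots> = (\<Prod>i\<in>{0..<n}. (if x i = y i then 1 else -1) + 1)"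
    by (rule pow_prod) simp
  also have "\<dots> = (if x = y then 2^n else 0)"
  proof (cases "x = y")
    case True then show ?thesis by simp
  next
    case False
    then obtain i where "x i \<noteq> y i" by auto
    moreover have "i < n" using assms \<open>x i \<noteq> y i\<close> unfolding cube_def by (metis mem_Collect_eq not_le)
    ultimately show ?thesis using False by (intro trans[OF prod_zero]) auto
  qed
  finally show ?thesis .
qed

lemma parseval:
  "(\<Sum>S\<in>Pow {0..<n}. fourier n f S * fourier n g S) = avg (cube n) (\<lambda>x. f x * g x)"
proof -
  let ?C = "cube n" let ?N = "real (card (cube n))"
  have N: "?N = 2^n" by (simp add: card_cube)
  have "(\<Sum>S\<in>Pow {0..<n}. fourier n f S * fourier n g S)
     = (\<Sum>S\<in>Pow {0..<n}. \<Sum>x\<in>?C. \<Sum>y\<in>?C. f x * g y * (chi S x * chi S y) / ?N^2)"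
    unfolding fourier_def avg_def sum_product sum_divide_distrib
    by (intro sum.cong refl) (simp add: power2_eq_square algebra_simps)
  also have "\<dots> = (\<Sum>x\<in>?C. \<Sum>y\<in>?C. f x * g y * (\<Sum>S\<in>Pow {0..<n}. chi S x * chi S y) / ?N^2)"
    unfolding sum_distrib_left sum_divide_distrib
    by (subst sum.swap) (rule sum.cong[OF refl], subst sum.swap, rule refl)
  also have "\<dots> = (\<Sum>x\<in>?C. \<Sum>y\<in>?C. if x = y then f x * g x * 2^n / ?N^2 else 0)"
    by (intro sum.cong refl) (simp add: kernel)
  also have "\<dots> = (\<Sum>x\<in>?C. f x * g x / ?N)"
    using finite_cube by (simp add: sum.delta N power2_eq_square)
  finally show ?thesis by (simp add: avg_def sum_divide_distrib)
qed

lemma perm_act_cube: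
  assumes "\<pi> permutes J" "J \<subseteq> {0..<n}" "x \<in> cube n"
  shows "perm_act \<pi> x \<in> cube n"
proof -
  have "inv \<pi> i = i" if "n \<le> i" for i
    using permutes_not_in[OF permutes_inv[OF assms(1)]] assms(2) that by (metis atLeastLessThan_iff not_le subsetD)
  then show ?thesis using assms(3) by (auto simp: cube_def perm_act_def)
qed

lemma perm_act_bij:
  assumes "\<pi> permutes J" "J \<subseteq> {0..<n}"
  shows "bij_betw (perm_act \<pi>) (cube n) (cube n)"
proof (rule bij_betw_byWitness[where f'="perm_act (inv \<pi>)"])
  show "\<forall>x\<in>cube n. perm_act (inv \<pi>) (perm_act \<pi> x) = x"
    using permutes_inv_o[OF assms(1)] permutes_inv_inv[OF assms(1)]
    by (simp add: perm_act_def comp_assoc)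
  show "\<forall>x\<in>cube n. perm_act \<pi> (perm_act (inv \<pi>) x) = x"
    using permutes_inv_o[OF assms(1)] permutes_inv_inv[OF assms(1)]
    by (simp add: perm_act_def comp_assoc)
  show "perm_act \<pi> ` cube n \<subseteq> cube n" using perm_act_cube[OF assms] by auto
  show "perm_act (inv \<pi>) ` cube n \<subseteq> cube n"
    using perm_act_cube[OF permutes_inv[OF assms(1)] assms(2)] by auto
qed

lemma chi_comp:
  assumes "\<pi> permutes J" "finite S"
  shows "chi S (y \<circ> \<pi>) = chi (\<pi> ` S) y"
  using assms by (simp add: chi_prod prod.reindex[OF inj_on_subset[OF permutes_inj[OF assms(1)]]])

lemma fourier_perm:
  assumes "\<pi> permutes J" "J \<subseteq> {0..<n}" "finite S"
  shows "fourier n (\<lambda>x. f (perm_act \<pi> x)) S = fourier n f (\<pi> ` S)"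
proof -
  have "(\<Sum>x\<in>cube n. f (perm_act \<pi> x) * chi S x)
      = (\<Sum>x\<in>cube n. (\<lambda>y. f y * chi S (y \<circ> \<pi>)) (perm_act \<pi> x))"
    using permutes_inv_o[OF assms(1)] by (simp add: perm_act_def comp_assoc)
  also have "\<dots> = (\<Sum>y\<in>cube n. f y * chi S (y \<circ> \<pi>))"
    by (rule sum.reindex_bij_betw[OF perm_act_bij[OF assms(1,2)]])
  also have "\<dots> = (\<Sum>y\<in>cube n. f y * chi (\<pi> ` S) y)"
    using chi_comp[OF assms(1,3)] by simp
  finally show ?thesis by (simp add: fourier_def avg_def)
qed

lemma avg_const: "finite P \<Longrightarrow> P \<noteq> {} \<Longrightarrow> avg P (\<lambda>_. c) = c"
  by (simp add: avg_def)

lemma avg_sum_swap: "(\<Sum>S\<in>B. avg P (g S)) = avg P (\<lambda>\<pi>. \<Sum>S\<in>B. g S \<pi>)"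
  unfolding avg_def sum_divide_distrib[symmetric] by (subst sum.swap) rule

lemma var_alt:
  assumes "finite P" "P \<noteq> {}"
  shows "var P h = avg P (\<lambda>a. (h a)^2) - (avg P h)^2"
proof -
  let ?m = "avg P h" let ?M = "real (card P)"
  have M: "?M > 0" using assms by (simp add: card_gt_0_iff)
  have s: "(\<Sum>a\<in>P. h a) = ?M * ?m" using M by (simp add: avg_def)
  have "(\<Sum>a\<in>P. (h a - ?m)^2) = (\<Sum>a\<in>P. (h a)^2) - 2 * ?m * (\<Sum>a\<in>P. h a) + ?M * ?m^2"
    by (simp add: power2_diff sum.distrib sum_subtractf sum_distrib_left sum_distrib_right algebra_simps)
  then have "var P h = ((\<Sum>a\<in>P. (h a)^2) - 2 * ?m * (?M * ?m) + ?M * ?m^2) / ?M"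
    unfolding s[symmetric] by (simp add: var_def avg_def)
  also have "\<dots> = (\<Sum>a\<in>P. (h a)^2) / ?M - ?m^2"
    using M by (simp add: field_simps power2_eq_square)
  also have "(\<Sum>a\<in>P. (h a)^2) / ?M = avg P (\<lambda>a. (h a)^2)" by (simp add: avg_def)
  finally show ?thesis .
qed

lemma symJ_finite: "J \<subseteq> {0..<n} \<Longrightarrow> finite (symJ J)"
  unfolding symJ_def by (rule finite_permutations) (meson finite_atLeastLessThan finite_subset)

lemma symJ_ne: "symJ J \<noteq> {}"
  unfolding symJ_def using permutes_id by blast

lemma image_pow_bij:
  assumes "\<pi> permutes J" "J \<subseteq> {0..<n}"
  shows "bij_betw ((`) \<pi>) (Pow {0..<n}) (Pow {0..<n})"
proof -
  have p: "\<pi> permutes {0..<n}" using permutes_subset[OF assms(1,2)] .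
  have pi: "inv \<pi> permutes {0..<n}" using permutes_inv[OF p] .
  show ?thesis
  proof (rule bij_betw_byWitness[where f'="(`) (inv \<pi>)"])
    show "\<forall>S\<in>Pow {0..<n}. inv \<pi> ` \<pi> ` S = S"
      using permutes_inv_o[OF p] by (simp add: image_comp)
    show "\<forall>S\<in>Pow {0..<n}. \<pi> ` inv \<pi> ` S = S"
      using permutes_inv_o[OF p] by (simp add: image_comp)
    show "(`) \<pi> ` Pow {0..<n} \<subseteq> Pow {0..<n}"
      using permutes_image[OF p] by auto
    show "(`) (inv \<pi>) ` Pow {0..<n} \<subseteq> Pow {0..<n}"
      using permutes_image[OF pi] by auto
  qed
qed

lemma comp_bij:
  assumes "\<pi> \<in> symJ J"
  shows "bij_betw (\<lambda>\<sigma>. \<sigma> \<circ> \<pi>) (symJ J) (symJ J)"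
proof -
  have p: "\<pi> permutes J" using assms by (simp add: symJ_def)
  show ?thesis
  proof (rule bij_betw_byWitness[where f'="\<lambda>\<sigma>. \<sigma> \<circ> inv \<pi>"])
    show "\<forall>\<sigma>\<in>symJ J. \<sigma> \<circ> \<pi> \<circ> inv \<pi> = \<sigma>"
      using permutes_inv_o[OF p] by (simp add: comp_assoc)
    show "\<forall>\<sigma>\<in>symJ J. \<sigma> \<circ> inv \<pi> \<circ> \<pi> = \<sigma>"
      using permutes_inv_o[OF p] by (simp add: comp_assoc)
    show "(\<lambda>\<sigma>. \<sigma> \<circ> \<pi>) ` symJ J \<subseteq> symJ J"
      using p by (auto simp: symJ_def intro: permutes_compose)
    show "(\<lambda>\<sigma>. \<sigma> \<circ> inv \<pi>) ` symJ J \<subseteq> symJ J"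
      using permutes_inv[OF p] by (auto simp: symJ_def intro: permutes_compose)
  qed
qed

lemma avg_prod: "finite A \<Longrightarrow> finite B \<Longrightarrow> avg (A \<times> B) (\<lambda>(x,y). g x y) = avg B (\<lambda>y. avg A (\<lambda>x. g x y))"
  unfolding avg_def card_cartesian_product sum.cartesian_product[symmetric] sum_divide_distrib[symmetric]
  by (subst sum.swap) (simp add: field_simps)

lemma avg_lin: "finite P \<Longrightarrow> P \<noteq> {} \<Longrightarrow> avg P (\<lambda>a. c - d * g a) = c - d * avg P g"
  by (simp add: avg_def sum_subtractf sum_distrib_left[symmetric] field_simps card_gt_0_iff)

lemma avg_cmult: "c * avg P g = avg P (\<lambda>a. c * g a)"
  by (simp add: avg_def sum_distrib_left)

lemma avg_cong: "(\<And>a. a \<in> P \<Longrightarrow> g a = h a) \<Longrightarrow> avg P g = avg P h"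
  by (simp add: avg_def)

theorem proposition2:
  fixes n :: nat and f :: "(nat \<Rightarrow> bool) \<Rightarrow> real" and J :: "nat set"
  assumes "\<forall>x\<in>cube n. f x = 1 \<or> f x = -1"
    and "J \<subseteq> {0..<n}"
  shows "SymInf n f J
     = 1/2 * (\<Sum>S\<in>Pow {0..<n}. var (symJ J) (\<lambda>\<pi>. fourier n f (\<pi> ` S)))"
proof -
  define F where "F = fourier n f"
  define P where "P = symJ J"
  define B where "B = Pow {0..<n::nat}"
  define A where "A = avg P (\<lambda>\<pi>. \<Sum>S\<in>B. F S * F (\<pi> ` S))"
  define c where "c S = avg P (\<lambda>\<sigma>. F (\<sigma> ` S))" for S
  have fP: "finite P" and neP: "P \<noteq> {}" using symJ_finite[OF assms(2)] symJ_ne by (auto simp: P_def)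
  have fB: "finite B" by (simp add: B_def)
  have fS: "finite S" if "S \<in> B" for S using that unfolding B_def
    by (meson PowD finite_atLeastLessThan finite_subset)
  have neC: "cube n \<noteq> {}" using card_cube[of n] by auto
  have Pperm: "\<pi> permutes J" if "\<pi> \<in> P" for \<pi> using that by (simp add: P_def symJ_def)
  have sq1: "avg (cube n) (\<lambda>x. f x * f x) = 1"
  proof -
    have "avg (cube n) (\<lambda>x. f x * f x) = avg (cube n) (\<lambda>_. 1)"
      by (rule avg_cong) (use assms(1) in auto)
    then show ?thesis using avg_const[OF finite_cube neC] by simp
  qed
  have L: "SymInf n f J = 1/2 - 1/2 * A"
  proof -
    have "SymInf n f J = avg P (\<lambda>\<pi>. avg (cube n) (\<lambda>x. if f x \<noteq> f (perm_act \<pi> x) then 1 else 0))"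
      unfolding SymInf_def P_def by (rule avg_prod[OF finite_cube symJ_finite[OF assms(2)]])
    also have "\<dots> = avg P (\<lambda>\<pi>. 1/2 - 1/2 * (\<Sum>S\<in>B. F S * F (\<pi> ` S)))"
    proof (rule avg_cong)
      fix \<pi> assume "\<pi> \<in> P"
      then have p: "\<pi> permutes J" by (rule Pperm)
      have "avg (cube n) (\<lambda>x. if f x \<noteq> f (perm_act \<pi> x) then 1 else 0)
          = avg (cube n) (\<lambda>x. 1/2 - 1/2 * (f x * f (perm_act \<pi> x)))"
      proof (rule avg_cong)
        fix x assume x: "x \<in> cube n"
        have "perm_act \<pi> x \<in> cube n" by (rule perm_act_cube[OF p assms(2) x])
        then have "f (perm_act \<pi> x) = 1 \<or> f (perm_act \<pi> x) = -1" "f x = 1 \<or> f x = -1"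
          using assms(1) x by auto
        then show "(if f x \<noteq> f (perm_act \<pi> x) then 1 else 0) = 1/2 - 1/2 * (f x * f (perm_act \<pi> x))"
          by auto
      qed
      also have "\<dots> = 1/2 - 1/2 * avg (cube n) (\<lambda>x. f x * f (perm_act \<pi> x))"
        by (rule avg_lin[OF finite_cube neC])
      also have "avg (cube n) (\<lambda>x. f x * f (perm_act \<pi> x)) = (\<Sum>S\<in>B. F S * F (\<pi> ` S))"
        unfolding parseval[symmetric] B_def F_def
        by (intro sum.cong refl) (simp add: fourier_perm[OF p assms(2)] fS[unfolded B_def])
      finally show "avg (cube n) (\<lambda>x. if f x \<noteq> f (perm_act \<pi> x) then 1 else 0)
          = 1/2 - 1/2 * (\<Sum>S\<in>B. F S * F (\<pi> ` S))" .
    qed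
    also have "\<dots> = 1/2 - 1/2 * A" unfolding A_def by (rule avg_lin[OF fP neP])
    finally show ?thesis .
  qed
  have sq: "(\<Sum>S\<in>B. (F (\<pi> ` S))^2) = 1" if "\<pi> \<in> P" for \<pi>
  proof -
    have "(\<Sum>S\<in>B. (F (\<pi> ` S))^2) = (\<Sum>S\<in>B. (F S)^2)"
      unfolding B_def by (rule sum.reindex_bij_betw[OF image_pow_bij[OF Pperm[OF that] assms(2)]])
    also have "\<dots> = 1" using sq1 parseval[of n f f] by (simp add: B_def F_def power2_eq_square)
    finally show ?thesis .
  qed
  have cinv: "c (\<pi> ` S) = c S" if "\<pi> \<in> P" for \<pi> S
  proof -
    have "(\<Sum>\<sigma>\<in>P. F (\<sigma> ` \<pi> ` S)) = (\<Sum>\<sigma>\<in>P. (\<lambda>\<tau>. F (\<tau> ` S)) (\<sigma> \<circ> \<pi>))"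
      by (simp add: image_comp)
    also have "\<dots> = (\<Sum>\<sigma>\<in>P. F (\<sigma> ` S))"
      using sum.reindex_bij_betw[OF comp_bij[of \<pi> J], of "\<lambda>\<tau>. F (\<tau> ` S)"] that by (simp add: P_def)
    finally show ?thesis by (simp add: c_def avg_def)
  qed
  have csq: "(\<Sum>S\<in>B. (c S)^2) = A"
  proof -
    have "(\<Sum>S\<in>B. (c S)^2) = (\<Sum>S\<in>B. avg P (\<lambda>\<pi>. c S * F (\<pi> ` S)))"
      unfolding power2_eq_square by (intro sum.cong refl) (simp add: avg_cmult c_def)
    also have "\<dots> = avg P (\<lambda>\<pi>. \<Sum>S\<in>B. c S * F (\<pi> ` S))" by (rule avg_sum_swap)
    also have "\<dots> = avg P (\<lambda>\<pi>. \<Sum>T\<in>B. c T * F T)"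
    proof (rule avg_cong)
      fix \<pi> assume h: "\<pi> \<in> P"
      have "(\<Sum>S\<in>B. c S * F (\<pi> ` S)) = (\<Sum>S\<in>B. (\<lambda>T. c T * F T) (\<pi> ` S))"
        using cinv[OF h] by simp
      also have "\<dots> = (\<Sum>T\<in>B. c T * F T)"
        unfolding B_def by (rule sum.reindex_bij_betw[OF image_pow_bij[OF Pperm[OF h] assms(2)]])
      finally show "(\<Sum>S\<in>B. c S * F (\<pi> ` S)) = (\<Sum>T\<in>B. c T * F T)" .
    qed
    also have "\<dots> = (\<Sum>T\<in>B. c T * F T)" by (rule avg_const[OF fP neP])
    also have "\<dots> = (\<Sum>T\<in>B. avg P (\<lambda>\<sigma>. F T * F (\<sigma> ` T)))"
      by (simp add: c_def avg_cmult[symmetric] mult.commute)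
    also have "\<dots> = A" unfolding A_def by (rule avg_sum_swap)
    finally show ?thesis .
  qed
  have "(\<Sum>S\<in>B. var P (\<lambda>\<pi>. F (\<pi> ` S)))
      = (\<Sum>S\<in>B. avg P (\<lambda>\<pi>. (F (\<pi> ` S))^2) - (c S)^2)"
    by (simp add: var_alt[OF fP neP] c_def)
  also have "\<dots> = avg P (\<lambda>\<pi>. \<Sum>S\<in>B. (F (\<pi> ` S))^2) - A"
    by (simp add: sum_subtractf avg_sum_swap csq)
  also have "avg P (\<lambda>\<pi>. \<Sum>S\<in>B. (F (\<pi> ` S))^2) = avg P (\<lambda>_. 1)"
    by (rule avg_cong) (rule sq)
  also have "\<dots> = 1" by (rule avg_const[OF fP neP])
  finally have R: "(\<Sum>S\<in>B. var P (\<lambda>\<pi>. F (\<pi> ` S))) = 1 - A" .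
  show ?thesis using L R by (simp add: B_def P_def F_def)
qed

end
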